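(* A marker-per-face strategy with point-plane data does not uniquely determine a scene consisting of several convex polyhedra: there exist two distinct finite sets $S\neq S'$ of pairwise disjoint convex polyhedra in $\mathbb{R}^3$ and a finite set $M$ of point-plane markers that is a marker-per-face markup of both $S$ and $S'$. Moreover, the same holds with point-normal markers in place of point-plane markers.
   Context: A polyhedron is a closed, connected, three-dimensional region of $\mathbb{R}^3$ whose boundary consists of finitely many polygons (faces) such that every edge of every face is shared with exactly one other face, two faces intersect only in shared edges or vertices, and faces sharing a vertex can be cyclically ordered so that consecutive ones share an edge; faces are taken maximal (closures of connected components of the locally planar part of the boundary). A point-plane marker is a pair $(p,R)$ with $R$ a plane and $p\in R$; a finite set $M$ of such markers is a marker-per-face markup of a finite set $S$ of polyhedra if each $(p,R)\in M$ has $p$ on some face $F$ of some polyhedron in $S$ with $R$ the plane of $F$, and every face $F$ of every polyhedron in $S$ contains the point of some marker whose plane is the plane of $F$. A point-normal marker is a pair $(p,n)$ with $n$ a unit vector; the markup condition is the same with "the plane of $F$" replaced by "the outward unit normal on $F$". *)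

theory Defs
  imports "HOL-Analysis.Analysis"
begin

text \<open>Its faces (maximal
planar pieces of the boundary) are exactly its facets.\<close>
definition convex_polyhedron :: "(real^3) set \<Rightarrow> bool" where
  "convex_polyhedron P \<longleftrightarrow> polytope P \<and> aff_dim P = 3"

definition is_plane :: "(real^3) set \<Rightarrow> bool" where
  "is_plane R \<longleftrightarrow> affine R \<and> aff_dim R = 2"

definition plane_of :: "(real^3) set \<Rightarrow> (real^3) set" where
  "plane_of F = affine hull F"

definition outward_unit_normal :: "(real^3) set \<Rightarrow> (real^3) set \<Rightarrow> real^3 \<Rightarrow> bool" where
  "outward_unit_normal P F n \<longleftrightarrow> norm n = 1 \<and> (\<forall>x\<in>P. \<forall>y\<in>F. n \<bullet> x \<le> n \<bullet> y)"

definition point_plane_markup :: "((real^3) \<times> (real^3) set) set \<Rightarrow> (real^3) set set \<Rightarrow> bool" where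
  "point_plane_markup M S \<longleftrightarrow>
     finite M \<and> finite S \<and>
     (\<forall>(p, R)\<in>M. is_plane R \<and> p \<in> R) \<and>
     (\<forall>(p, R)\<in>M. \<exists>P\<in>S. \<exists>F. F facet_of P \<and> p \<in> F \<and> R = plane_of F) \<and>
     (\<forall>P\<in>S. \<forall>F. F facet_of P \<longrightarrow> (\<exists>(p, R)\<in>M. p \<in> F \<and> R = plane_of F))"

definition point_normal_markup :: "((real^3) \<times> (real^3)) set \<Rightarrow> (real^3) set set \<Rightarrow> bool" where
  "point_normal_markup M S \<longleftrightarrow>
     finite M \<and> finite S \<and>
     (\<forall>(p, n)\<in>M. norm n = 1) \<and>
     (\<forall>(p, n)\<in>M. \<exists>P\<in>S. \<exists>F. F facet_of P \<and> p \<in> F \<and> outward_unit_normal P F n) \<and>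
     (\<forall>P\<in>S. \<forall>F. F facet_of P \<longrightarrow> (\<exists>(p, n)\<in>M. p \<in> F \<and> outward_unit_normal P F n))"

definition convex_scene :: "(real^3) set set \<Rightarrow> bool" where
  "convex_scene S \<longleftrightarrow> finite S \<and> (\<forall>P\<in>S. convex_polyhedron P) \<and> pairwise disjnt S"

end

theory Submission imports Defs begin

definition nv :: "('n::finite \<times> bool) \<Rightarrow> real^'n" where
  "nv k = (if snd k then axis (fst k) 1 else - axis (fst k) 1)"
definition off :: "real^'n \<Rightarrow> real^'n \<Rightarrow> ('n::finite \<times> bool) \<Rightarrow> real" where
  "off a b k = (if snd k then b $ fst k else - a $ fst k)"

lemma nv_nz: "nv k \<noteq> 0"
  by (simp add: nv_def axis_eq_0_iff)

lemma hs_eq: "{x. nv k \<bullet> x = off a b k} = (if snd k then {x. x $ fst k = b $ fst k} else {x. x $ fst k = a $ fst k})"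
  by (auto simp: nv_def off_def inner_axis')

lemma facets_box:
  fixes a b :: "real^'n"
  assumes ab: "\<And>i. a$i < b$i"
  shows "F facet_of cbox a b \<longleftrightarrow>
    (\<exists>i. F = cbox a b \<inter> {x. x$i = a$i} \<or> F = cbox a b \<inter> {x. x$i = b$i})"
proof -
  define g where "g k = {x. nv k \<bullet> x \<le> off a b k}" for k
  define sk where "sk h = (SOME k. g k = h)" for h
  have skp: "g (sk (g k)) = g k" for k unfolding sk_def by (rule someI) auto
  have fr: "{x. nv k \<bullet> x = off a b k} = frontier (g k)" for k
    unfolding g_def by (simp add: frontier_halfspace_le nv_nz)
  have int: "interior (cbox a b) \<noteq> {}"
  proof -
    have "(\<chi> j. (a$j + b$j)/2) \<in> box a b" using ab by (simp add: mem_box_cart)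
    then show ?thesis by auto
  qed
  have ah: "affine hull (cbox a b) = UNIV" by (rule affine_hull_nonempty_interior[OF int])
  have capg: "\<Inter>(range g) = cbox a b"
  proof (intro set_eqI iffI)
    fix x assume "x \<in> \<Inter>(range g)"
    then have "x \<in> g (i,True)" "x \<in> g (i,False)" for i by auto
    then show "x \<in> cbox a b" by (auto simp: g_def nv_def off_def mem_box_cart inner_axis')
  next
    fix x assume "x \<in> cbox a b"
    then show "x \<in> \<Inter>(range g)" by (auto simp: g_def nv_def off_def mem_box_cart inner_axis')
  qed
  have E: "F facet_of cbox a b \<longleftrightarrow> (\<exists>h. h \<in> range g \<and> F = cbox a b \<inter> {x. nv (sk h) \<bullet> x = off a b (sk h)})"
  proof (rule facet_of_polyhedron_explicit)
    show "finite (range g)" by simp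
    show "cbox a b = affine hull cbox a b \<inter> \<Inter> (range g)" using ah capg by simp
    show "nv (sk h) \<noteq> 0 \<and> h = {x. nv (sk h) \<bullet> x \<le> off a b (sk h)}" if hr: "h \<in> range g" for h
    proof -
      obtain k where "h = g k" using hr by auto
      then show ?thesis using skp[of k] nv_nz[of "sk (g k)"] by (simp add: g_def)
    qed
    show "cbox a b \<subset> affine hull cbox a b \<inter> \<Inter> F'" if Fs: "F' \<subset> range g" for F'
    proof -
      obtain k where k: "g k \<notin> F'" using Fs by auto
      obtain i t where kit: "k = (i,t)" by (cases k)
      define p where "p = (\<chi> j. if j = i then (if t then b$i + 1 else a$i - 1) else a$j)"
      have "p \<in> h" if hF: "h \<in> F'" for h
      proof -
        have "h \<in> range g" using hF Fs by blast
        then obtain k' where k': "h = g k'" by blast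
        obtain j s where js: "k' = (j,s)" by (cases k')
        have "k' \<noteq> k" using k k' hF by auto
        then show ?thesis using ab[of i] ab[of j] unfolding k' js kit
          by (auto simp: g_def nv_def off_def p_def inner_axis' less_imp_le)
      qed
      moreover have "p \<notin> cbox a b" using ab[of i]
        by (auto simp: mem_box_cart p_def intro!: exI[of _ i])
      moreover have "cbox a b \<subseteq> \<Inter> F'" using capg Fs by blast
      ultimately show ?thesis using ah by auto
    qed
  qed
  have F2: "cbox a b \<inter> {x. nv (sk (g k)) \<bullet> x = off a b (sk (g k))} = cbox a b \<inter> {x. nv k \<bullet> x = off a b k}" for k
    using fr[of k] fr[of "sk (g k)"] skp[of k] by simp
  show ?thesis unfolding E
  proof
    assume "\<exists>h. h \<in> range g \<and> F = cbox a b \<inter> {x. nv (sk h) \<bullet> x = off a b (sk h)}"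
    then obtain k where "F = cbox a b \<inter> {x. nv k \<bullet> x = off a b k}" using F2 by auto
    then show "\<exists>i. F = cbox a b \<inter> {x. x$i = a$i} \<or> F = cbox a b \<inter> {x. x$i = b$i}"
    proof -
      assume Fk: "F = cbox a b \<inter> {x. nv k \<bullet> x = off a b k}"
      obtain i t where kit: "k = (i,t)" by (cases k)
      show ?thesis
      proof (cases t)
        case True
        then have "F = cbox a b \<inter> {x. x$i = b$i}" using Fk hs_eq[of k a b] kit by simp
        then show ?thesis by blast
      next
        case False
        then have "F = cbox a b \<inter> {x. x$i = a$i}" using Fk hs_eq[of k a b] kit by simp
        then show ?thesis by blast
      qed
    qed
  next
    assume "\<exists>i. F = cbox a b \<inter> {x. x$i = a$i} \<or> F = cbox a b \<inter> {x. x$i = b$i}"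
    then obtain i t where "F = cbox a b \<inter> {x. nv (i,t) \<bullet> x = off a b (i,t)}"
    proof -
      assume r: "\<And>i t. F = cbox a b \<inter> {x. nv (i,t) \<bullet> x = off a b (i,t)} \<Longrightarrow> thesis"
      obtain i where "F = cbox a b \<inter> {x. x$i = a$i} \<or> F = cbox a b \<inter> {x. x$i = b$i}"
        using \<open>\<exists>i. _\<close> by blast
      then show thesis
      proof
        assume "F = cbox a b \<inter> {x. x$i = a$i}"
        then show thesis using r[of i False] hs_eq[of "(i,False)" a b] by simp
      next
        assume "F = cbox a b \<inter> {x. x$i = b$i}"
        then show thesis using r[of i True] hs_eq[of "(i,True)" a b] by simp
      qed
    qed
    then show "\<exists>h. h \<in> range g \<and> F = cbox a b \<inter> {x. nv (sk h) \<bullet> x = off a b (sk h)}"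
      using F2 by blast
  qed
qed


lemma box_int: fixes a b :: "real^'n" assumes ab: "\<And>i. a$i < b$i"
  shows "interior (cbox a b) \<noteq> {}"
proof -
  have "(\<chi> j. (a$j + b$j)/2) \<in> box a b" using ab by (simp add: mem_box_cart)
  then show ?thesis by auto
qed

lemma aff_dim_box: fixes a b :: "real^3" assumes ab: "\<And>i. a$i < b$i"
  shows "aff_dim (cbox a b) = 3"
proof -
  have "aff_dim (cbox a b) = aff_dim (affine hull (cbox a b))" by simp
  also have "\<dots> = aff_dim (UNIV :: (real^3) set)"
    using affine_hull_nonempty_interior[OF box_int[OF ab]] by simp
  finally show ?thesis by simp
qed

lemma conv_box: fixes a b :: "real^3" assumes ab: "\<And>i. a$i < b$i"
  shows "convex_polyhedron (cbox a b)"
  using aff_dim_box[OF ab] polytope_interval by (simp add: convex_polyhedron_def)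

lemma hyp_eq: "{x::real^'n. x$i = c} = {x. axis i 1 \<bullet> x = c}"
  by (simp add: inner_axis')

lemma plane_box: fixes a b :: "real^3" assumes ab: "\<And>i. a$i < b$i"
  and c: "c = a$i \<or> c = b$i"
  shows "plane_of (cbox a b \<inter> {x. x$i = c}) = {x. x$i = c}"
proof -
  let ?F = "cbox a b \<inter> {x. x$i = c}"
  have fac: "?F facet_of cbox a b" using c by (auto simp: facets_box[OF ab])
  then have ne: "?F \<noteq> {}" and ad: "aff_dim ?F = 2"
    using aff_dim_box[OF ab] by (auto simp: facet_of_def)
  have aH: "affine {x::real^3. x$i = c}" unfolding hyp_eq by (rule affine_hyperplane)
  have dH: "aff_dim {x::real^3. x$i = c} = 2" unfolding hyp_eq
    by (subst aff_dim_hyperplane) (auto simp: axis_eq_0_iff)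
  show ?thesis unfolding plane_of_def
  proof (rule affine_dim_equal)
    show "affine (affine hull ?F)" by simp
    show "affine {x::real^3. x$i = c}" by (rule aH)
    show "affine hull ?F \<noteq> {}" using ne by simp
    show "affine hull ?F \<subseteq> {x. x$i = c}" by (rule hull_minimal) (use aH in auto)
    show "aff_dim (affine hull ?F) = aff_dim {x::real^3. x$i = c}" using ad dH by simp
  qed
qed

lemma normal_up: fixes a b :: "real^3"
  shows "outward_unit_normal (cbox a b) (cbox a b \<inter> {x. x$i = b$i}) (axis i 1)"
  by (auto simp: outward_unit_normal_def inner_axis' mem_box_cart)

lemma normal_lo: fixes a b :: "real^3"
  shows "outward_unit_normal (cbox a b) (cbox a b \<inter> {x. x$i = a$i}) (- axis i 1)"
  by (auto simp: outward_unit_normal_def inner_axis' mem_box_cart)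


definition smax :: "real^'n \<Rightarrow> real^'n \<Rightarrow> real^'n" where "smax a a' = (\<chi> j. max (a$j) (a'$j))"
definition smin :: "real^'n \<Rightarrow> real^'n \<Rightarrow> real^'n" where "smin a a' = (\<chi> j. min (a$j) (a'$j))"
definition ov :: "real^'n \<Rightarrow> real^'n \<Rightarrow> real^'n \<Rightarrow> real^'n \<Rightarrow> bool" where
  "ov a b a' b' \<longleftrightarrow> (\<forall>j. max (a$j) (a'$j) \<le> min (b$j) (b'$j))"
definition covers :: "((real^'n) \<times> (real^'n)) set \<Rightarrow> ((real^'n) \<times> (real^'n)) set \<Rightarrow> bool" where
  "covers B B' \<longleftrightarrow> (\<forall>(a,b)\<in>B. \<forall>i. (\<exists>(a',b')\<in>B'. a'$i = a$i \<and> ov a b a' b') \<and>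
                                    (\<exists>(a',b')\<in>B'. b'$i = b$i \<and> ov a b a' b'))"
definition wfB :: "((real^'n) \<times> (real^'n)) set \<Rightarrow> bool" where
  "wfB B \<longleftrightarrow> (\<forall>(a,b)\<in>B. \<forall>i. a$i < b$i)"
definition VV :: "((real^'n) \<times> (real^'n)) set \<Rightarrow> ((real^'n) \<times> (real^'n)) set \<Rightarrow> (real^'n) set" where
  "VV B B' = (\<lambda>((a,b),(a',b')). smax a a') ` (B \<times> B') \<union> (\<lambda>((a,b),(a',b')). smin b b') ` (B \<times> B')"
definition bx :: "(real^'n) \<times> (real^'n) \<Rightarrow> (real^'n) set" where "bx = (\<lambda>(a,b). cbox a b)"
definition NS :: "(real^3) set" where "NS = range (\<lambda>i. axis i 1) \<union> range (\<lambda>i. - axis i 1)"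

lemma cover_one:
  fixes B B' :: "((real^3) \<times> (real^3)) set"
  assumes ab: "(a,b) \<in> B" and w: "wfB B" and w': "wfB B'" and cv: "covers B B'"
    and F: "F facet_of cbox a b"
  shows "\<exists>p\<in>VV B B'. p \<in> F \<and> (\<exists>P'\<in>bx ` B'. \<exists>F'. F' facet_of P' \<and> p \<in> F' \<and>
     plane_of F' = plane_of F \<and> (\<exists>n\<in>NS. outward_unit_normal (cbox a b) F n \<and> outward_unit_normal P' F' n))"
proof -
  have abi: "\<And>i. a$i < b$i" using w ab by (auto simp: wfB_def)
  obtain i where Fi: "F = cbox a b \<inter> {x. x$i = a$i} \<or> F = cbox a b \<inter> {x. x$i = b$i}"
    using F facets_box[OF abi] by blast
  then show ?thesis
  proof
    assume Fl: "F = cbox a b \<inter> {x. x$i = a$i}"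
    obtain a' b' where ab': "(a',b') \<in> B'" and eq: "a'$i = a$i" and o: "ov a b a' b'"
      using cv ab by (fastforce simp: covers_def)
    have abi': "\<And>i. a'$i < b'$i" using w' ab' by (auto simp: wfB_def)
    define p where "p = smax a a'"
    have pV: "p \<in> VV B B'" unfolding VV_def p_def using ab ab' by force
    have pF: "p \<in> F" using o abi abi' eq unfolding Fl p_def smax_def ov_def
      by (auto simp: mem_box_cart)
    define F' where "F' = cbox a' b' \<inter> {x. x$i = a'$i}"
    have F'f: "F' facet_of cbox a' b'" unfolding F'_def facets_box[OF abi'] by blast
    have pF': "p \<in> F'" using o abi abi' eq unfolding F'_def p_def smax_def ov_def
      by (auto simp: mem_box_cart)
    have pl: "plane_of F' = plane_of F" unfolding F'_def Fl
      using plane_box[OF abi' , of "a'$i" i] plane_box[OF abi, of "a$i" i] eq by simp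
    have n: "outward_unit_normal (cbox a b) F (- axis i 1) \<and> outward_unit_normal (cbox a' b') F' (- axis i 1)"
      unfolding Fl F'_def by (simp add: normal_lo)
    have "- axis i 1 \<in> NS" by (simp add: NS_def)
    moreover have "cbox a' b' \<in> bx ` B'" using ab' unfolding bx_def by force
    ultimately show ?thesis using pV pF F'f pF' pl n by blast
  next
    assume Fl: "F = cbox a b \<inter> {x. x$i = b$i}"
    obtain a' b' where ab': "(a',b') \<in> B'" and eq: "b'$i = b$i" and o: "ov a b a' b'"
      using cv ab by (fastforce simp: covers_def)
    have abi': "\<And>i. a'$i < b'$i" using w' ab' by (auto simp: wfB_def)
    define p where "p = smin b b'"
    have pV: "p \<in> VV B B'" unfolding VV_def p_def using ab ab' by force
    have pF: "p \<in> F" using o abi abi' eq unfolding Fl p_def smin_def ov_def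
      by (auto simp: mem_box_cart)
    define F' where "F' = cbox a' b' \<inter> {x. x$i = b'$i}"
    have F'f: "F' facet_of cbox a' b'" unfolding F'_def facets_box[OF abi'] by blast
    have pF': "p \<in> F'" using o abi abi' eq unfolding F'_def p_def smin_def ov_def
      by (auto simp: mem_box_cart)
    have pl: "plane_of F' = plane_of F" unfolding F'_def Fl
      using plane_box[OF abi' , of "b'$i" i] plane_box[OF abi, of "b$i" i] eq by simp
    have n: "outward_unit_normal (cbox a b) F (axis i 1) \<and> outward_unit_normal (cbox a' b') F' (axis i 1)"
      unfolding Fl F'_def by (simp add: normal_up)
    have "axis i 1 \<in> NS" by (simp add: NS_def)
    moreover have "cbox a' b' \<in> bx ` B'" using ab' unfolding bx_def by force
    ultimately show ?thesis using pV pF F'f pF' pl n by blast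
  qed
qed


lemma facet_plane: assumes "F facet_of P" "convex_polyhedron P"
  shows "is_plane (plane_of F)" "F \<subseteq> plane_of F"
  using assms by (auto simp: is_plane_def plane_of_def facet_of_def convex_polyhedron_def hull_subset)

lemma finite_facets: assumes "finite B"
  shows "finite (\<Union>P\<in>bx ` B. {F. F facet_of P})"
  using assms by (auto simp: bx_def polytope_interval finite_polytope_facets)

lemma bx_poly: assumes "wfB B" "P \<in> bx ` B" shows "convex_polyhedron P"
  using assms by (auto simp: bx_def wfB_def conv_box)

lemma bx_cases: assumes "P \<in> bx ` B" obtains a b where "(a,b) \<in> B" "P = cbox a b"
  using assms by (auto simp: bx_def)

lemma main_gen:
  fixes B B' :: "((real^3) \<times> (real^3)) set"
  assumes fB: "finite B" and fB': "finite B'" and w: "wfB B" and w': "wfB B'"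
    and c1: "covers B B'" and c2: "covers B' B"
  shows "\<exists>M. point_plane_markup M (bx ` B) \<and> point_plane_markup M (bx ` B')"
    "\<exists>M. point_normal_markup M (bx ` B) \<and> point_normal_markup M (bx ` B')"
proof -
  define V where "V = VV B B' \<union> VV B' B"
  have fV: "finite V" unfolding V_def VV_def using fB fB' by simp
  let ?S = "bx ` B" and ?S' = "bx ` B'"
  define M where "M = {(p,R). p \<in> V \<and> (\<exists>P\<in>?S. \<exists>F. F facet_of P \<and> p \<in> F \<and> R = plane_of F)
                              \<and> (\<exists>P\<in>?S'. \<exists>F. F facet_of P \<and> p \<in> F \<and> R = plane_of F)}"
  have fM: "finite M"
  proof (rule finite_subset)
    show "M \<subseteq> V \<times> (plane_of ` (\<Union>P\<in>?S. {F. F facet_of P}))" unfolding M_def by blast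
    show "finite (V \<times> (plane_of ` (\<Union>P\<in>?S. {F. F facet_of P})))"
      using fV finite_facets[OF fB] by simp
  qed
  have pl: "is_plane R \<and> p \<in> R" if "(p,R) \<in> M" for p R
    using that bx_poly[OF w] facet_plane unfolding M_def by blast
  have cov1: "\<exists>(p, R)\<in>M. p \<in> F \<and> R = plane_of F" if hP: "P \<in> ?S" "F facet_of P" for P F
  proof -
    obtain a b where ab: "(a,b) \<in> B" "P = cbox a b" using hP(1) by (rule bx_cases)
    obtain p P' F' where "p \<in> VV B B'" "p \<in> F" "P' \<in> ?S'" "F' facet_of P'" "p \<in> F'" "plane_of F' = plane_of F"
      using cover_one[OF ab(1) w w' c1] hP(2) ab(2) by blast
    then have "(p, plane_of F) \<in> M" unfolding M_def V_def using hP by fastforce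
    then show ?thesis using \<open>p \<in> F\<close> by blast
  qed
  have cov2: "\<exists>(p, R)\<in>M. p \<in> F \<and> R = plane_of F" if hP: "P \<in> ?S'" "F facet_of P" for P F
  proof -
    obtain a b where ab: "(a,b) \<in> B'" "P = cbox a b" using hP(1) by (rule bx_cases)
    obtain p P' F' where "p \<in> VV B' B" "p \<in> F" "P' \<in> ?S" "F' facet_of P'" "p \<in> F'" "plane_of F' = plane_of F"
      using cover_one[OF ab(1) w' w c2] hP(2) ab(2) by blast
    then have "(p, plane_of F) \<in> M" unfolding M_def V_def using hP by fastforce
    then show ?thesis using \<open>p \<in> F\<close> by blast
  qed
  have m1: "\<forall>(p, R)\<in>M. \<exists>P\<in>?S. \<exists>F. F facet_of P \<and> p \<in> F \<and> R = plane_of F"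
    unfolding M_def by blast
  have m2: "\<forall>(p, R)\<in>M. \<exists>P\<in>?S'. \<exists>F. F facet_of P \<and> p \<in> F \<and> R = plane_of F"
    unfolding M_def by blast
  have pl': "\<forall>(p, R)\<in>M. is_plane R \<and> p \<in> R" using pl by blast
  have "point_plane_markup M ?S" unfolding point_plane_markup_def
    using fM fB pl' m1 cov1 by blast
  moreover have "point_plane_markup M ?S'" unfolding point_plane_markup_def
    using fM fB' pl' m2 cov2 by blast
  ultimately show "\<exists>M. point_plane_markup M (bx ` B) \<and> point_plane_markup M (bx ` B')" by blast
  define N where "N = {(p,n). p \<in> V \<and> n \<in> NS \<and> (\<exists>P\<in>?S. \<exists>F. F facet_of P \<and> p \<in> F \<and> outward_unit_normal P F n)
                              \<and> (\<exists>P\<in>?S'. \<exists>F. F facet_of P \<and> p \<in> F \<and> outward_unit_normal P F n)}"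
  have fN: "finite N"
  proof (rule finite_subset)
    show "N \<subseteq> V \<times> NS" unfolding N_def by blast
    show "finite (V \<times> NS)" using fV by (simp add: NS_def)
  qed
  have nn: "norm n = 1" if "(p,n) \<in> N" for p n
    using that unfolding N_def outward_unit_normal_def by blast
  have cov1': "\<exists>(p, n)\<in>N. p \<in> F \<and> outward_unit_normal P F n" if hP: "P \<in> ?S" "F facet_of P" for P F
  proof -
    obtain a b where ab: "(a,b) \<in> B" "P = cbox a b" using hP(1) by (rule bx_cases)
    have C: "\<exists>p\<in>VV B B'. p \<in> P \<and> p \<in> F \<and> (\<exists>P'\<in>?S'. \<exists>F'. F' facet_of P' \<and> p \<in> F' \<and>
     plane_of F' = plane_of F \<and> (\<exists>n\<in>NS. outward_unit_normal P F n \<and> outward_unit_normal P' F' n))"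
      using cover_one[OF ab(1) w w' c1 hP(2)[unfolded ab(2)]] facet_of_imp_subset[OF hP(2)] unfolding ab(2)[symmetric] by blast
    then obtain p P' F' n where "p \<in> VV B B'" "p \<in> F" "P' \<in> ?S'" "F' facet_of P'" "p \<in> F'" "n \<in> NS"
       "outward_unit_normal P F n" "outward_unit_normal P' F' n" by blast
    then have "(p, n) \<in> N" unfolding N_def V_def using hP by blast
    then show ?thesis using \<open>p \<in> F\<close> \<open>outward_unit_normal P F n\<close> by blast
  qed
  have cov2': "\<exists>(p, n)\<in>N. p \<in> F \<and> outward_unit_normal P F n" if hP: "P \<in> ?S'" "F facet_of P" for P F
  proof -
    obtain a b where ab: "(a,b) \<in> B'" "P = cbox a b" using hP(1) by (rule bx_cases)
    have C: "\<exists>p\<in>VV B' B. p \<in> P \<and> p \<in> F \<and> (\<exists>P'\<in>?S. \<exists>F'. F' facet_of P' \<and> p \<in> F' \<and>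
     plane_of F' = plane_of F \<and> (\<exists>n\<in>NS. outward_unit_normal P F n \<and> outward_unit_normal P' F' n))"
      using cover_one[OF ab(1) w' w c2 hP(2)[unfolded ab(2)]] facet_of_imp_subset[OF hP(2)] unfolding ab(2)[symmetric] by blast
    then obtain p P' F' n where "p \<in> VV B' B" "p \<in> F" "P' \<in> ?S" "F' facet_of P'" "p \<in> F'" "n \<in> NS"
       "outward_unit_normal P F n" "outward_unit_normal P' F' n" by blast
    then have "(p, n) \<in> N" unfolding N_def V_def using hP by blast
    then show ?thesis using \<open>p \<in> F\<close> \<open>outward_unit_normal P F n\<close> by blast
  qed
  have n1: "\<forall>(p, n)\<in>N. \<exists>P\<in>?S. \<exists>F. F facet_of P \<and> p \<in> F \<and> outward_unit_normal P F n"
    unfolding N_def by blast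
  have n2: "\<forall>(p, n)\<in>N. \<exists>P\<in>?S'. \<exists>F. F facet_of P \<and> p \<in> F \<and> outward_unit_normal P F n"
    unfolding N_def by blast
  have nn': "\<forall>(p, n)\<in>N. norm n = 1" using nn by blast
  have "point_normal_markup N ?S" unfolding point_normal_markup_def
    using fN fB nn' n1 cov1' by blast
  moreover have "point_normal_markup N ?S'" unfolding point_normal_markup_def
    using fN fB' nn' n2 cov2' by blast
  ultimately show "\<exists>M. point_normal_markup M (bx ` B) \<and> point_normal_markup M (bx ` B')" by blast
qed


lemma disj_box: fixes a b c d :: "real^3"
  assumes "b$i < c$i \<or> d$i < a$i" shows "disjnt (cbox a b) (cbox c d)"
  using assms by (auto simp: disjnt_def mem_box_cart) (meson order_trans not_le)+

lemma pw3: "disjnt X Y \<Longrightarrow> disjnt X Z \<Longrightarrow> disjnt Y Z \<Longrightarrow> pairwise disjnt {X,Y,Z}"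
  by (auto simp: pairwise_insert disjnt_sym)

definition BB :: "((real^3) \<times> (real^3)) set" where
  "BB = {(vector [0,0,0], vector [1,1,3]), (vector [0,2,0], vector [3,3,1]), (vector [2,0,2], vector [3,3,3])}"
definition BB' :: "((real^3) \<times> (real^3)) set" where
  "BB' = {(vector [0,0,0], vector [1,3,1]), (vector [0,0,2], vector [3,1,3]), (vector [2,2,0], vector [3,3,3])}"

lemma wf1: "wfB BB" by (simp add: wfB_def BB_def forall_3)
lemma wf2: "wfB BB'" by (simp add: wfB_def BB'_def forall_3)
lemma cv1: "covers BB BB'" by (simp add: covers_def ov_def BB_def BB'_def forall_3)
lemma cv2: "covers BB' BB" by (simp add: covers_def ov_def BB_def BB'_def forall_3)

lemma scene1: "convex_scene (bx ` BB)"
proof -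
  have "bx ` BB = {cbox (vector [0,0,0]) (vector [1,1,3]), cbox (vector [0,2,0]) (vector [3,3,1]), cbox (vector [2,0,2]) (vector [3,3,3])}"
    by (simp add: BB_def bx_def)
  moreover have "pairwise disjnt \<dots>"
    by (intro pw3; rule disj_box[where i=1] disj_box[where i=2] disj_box[where i=3]; simp)
  ultimately show ?thesis using bx_poly[OF wf1] by (simp add: convex_scene_def BB_def)
qed

lemma scene2: "convex_scene (bx ` BB')"
proof -
  have "bx ` BB' = {cbox (vector [0,0,0]) (vector [1,3,1]), cbox (vector [0,0,2]) (vector [3,1,3]), cbox (vector [2,2,0]) (vector [3,3,3])}"
    by (simp add: BB'_def bx_def)
  moreover have "pairwise disjnt \<dots>"
    by (intro pw3; rule disj_box[where i=1] disj_box[where i=2] disj_box[where i=3]; simp)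
  ultimately show ?thesis using bx_poly[OF wf2] by (simp add: convex_scene_def BB'_def)
qed

lemma neq: "bx ` BB \<noteq> bx ` BB'"
proof
  assume e: "bx ` BB = bx ` BB'"
  have "cbox (vector [0,0,0]) (vector [1,1,3]) \<in> bx ` BB" by (force simp: BB_def bx_def)
  then have "cbox (vector [0,0,0]) (vector [1,1,3]) \<in> bx ` BB'" using e by simp
  moreover have "(vector [1/2,1/2,3/2] :: real^3) \<in> cbox (vector [0,0,0]) (vector [1,1,3])"
    by (simp add: mem_box_cart forall_3)
  moreover have "(vector [1/2,1/2,3/2] :: real^3) \<notin> P" if "P \<in> bx ` BB'" for P
    using that by (auto simp: BB'_def bx_def mem_box_cart forall_3)
  ultimately show False by blast
qed

theorem mainTheorem4:
  shows "(\<exists>S S' M. convex_scene S \<and> convex_scene S' \<and> S \<noteq> S' \<and>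
            point_plane_markup M S \<and> point_plane_markup M S') \<and>
         (\<exists>S S' M. convex_scene S \<and> convex_scene S' \<and> S \<noteq> S' \<and>
            point_normal_markup M S \<and> point_normal_markup M S')"
  using main_gen[of BB BB', OF _ _ wf1 wf2 cv1 cv2] scene1 scene2 neq
  by (auto simp: BB_def BB'_def)

end
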